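(* Fix $h\in\{2,\dots,H\}$ and suppose $\Psi_{h-1}$ is an $\alpha$-policy cover of $\mathcal{S}_{h-1}$ with $|\Psi_{h-1}|\le N$. Then for every $s\in\mathcal{S}_h$, $\rho_h(s)\ge\frac{\alpha\,\eta(s)}{N|\mathcal{A}|}$.
   Context: Block MDP: horizon $H$; finite latent states $\mathcal{S}=\sqcup_h\mathcal{S}_h$; countable observations $\mathcal{X}=\sqcup_h\mathcal{X}_h$; finite actions $\mathcal{A}$; start distribution $\mu$; transitions $T(\cdot\mid s,a)\in\Delta(\mathcal{S}_{h+1})$ for $s\in\mathcal{S}_h$; emissions $q(\cdot\mid s)\in\Delta(\mathcal{X}_h)$ with disjoint supports, decoder $g^\star$. Policies map $\mathcal{X}\to\Delta(\mathcal{A})$; $\Pi$ a policy class, $\Pi_{NS}=\Pi^H$ non-stationary policies. $\mathbb{P}_\pi[s]$ is the probability that $\pi$'s trajectory visits $s$; $\eta(s)=\max_{\pi\in\Pi_{NS}}\mathbb{P}_\pi[s]$. A finite set $\Psi$ of policies is an $\alpha$-policy cover of $\mathcal{S}_t$ if $\max_{\pi\in\Psi}\mathbb{P}_\pi[s]\ge\alpha\eta(s)$ for all $s\in\mathcal{S}_t$. $\rho_h(s)$ is the probability that $g^\star(x_h)=s$ when a policy $\pi$ is chosen uniformly from $\Psi_{h-1}$, followed for steps $1,\dots,h-2$ to reach $x_{h-1}$, then an action $a_{h-1}\sim\mathrm{Unf}(\mathcal{A})$ is taken. *)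

theory Defs
  imports "HOL-Probability.Probability"
begin

(* Block MDP data:
   - latent states: type 's (finite); layer s = h means s \<in> S_h
   - observations: type 'x (countable); xlayer x = h means x \<in> X_h
   - actions: type 'a (finite), A = UNIV
   - mu: start distribution, T s a: transition, q s: emission.
   A (non-stationary) policy is p :: nat \<Rightarrow> 'x \<Rightarrow> 'a pmf, p h used at step h (1-based). *)

definition block_mdp ::
  "nat \<Rightarrow> ('s::finite \<Rightarrow> nat) \<Rightarrow> ('x::countable \<Rightarrow> nat) \<Rightarrow> 's pmf
   \<Rightarrow> ('s \<Rightarrow> 'a::finite \<Rightarrow> 's pmf) \<Rightarrow> ('s \<Rightarrow> 'x pmf) \<Rightarrow> bool" where
  "block_mdp H layer xlayer mu T q \<longleftrightarrow>
     (\<forall>s. layer s \<in> {1..H}) \<and>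
     set_pmf mu \<subseteq> {s. layer s = 1} \<and>
     (\<forall>s a. layer s < H \<longrightarrow> set_pmf (T s a) \<subseteq> {s'. layer s' = layer s + 1}) \<and>
     (\<forall>s. set_pmf (q s) \<subseteq> {x. xlayer x = layer s}) \<and>
     (\<forall>s s'. s \<noteq> s' \<longrightarrow> set_pmf (q s) \<inter> set_pmf (q s') = {})"

definition decoder :: "('s \<Rightarrow> 'x pmf) \<Rightarrow> 'x \<Rightarrow> 's" where
  "decoder q x = (THE s. x \<in> set_pmf (q s))"

text \<open>Distribution of the latent state at step k+1 when following policy p.\<close>
primrec state_dist ::
  "'s pmf \<Rightarrow> ('s \<Rightarrow> 'a \<Rightarrow> 's pmf) \<Rightarrow> ('s \<Rightarrow> 'x pmf) \<Rightarrow> (nat \<Rightarrow> 'x \<Rightarrow> 'a pmf) \<Rightarrow> nat \<Rightarrow> 's pmf" where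
  "state_dist mu T q p 0 = mu"
| "state_dist mu T q p (Suc k) =
     state_dist mu T q p k \<bind> (\<lambda>s. q s \<bind> (\<lambda>x. p (Suc k) x \<bind> (\<lambda>a. T s a)))"

definition visit_prob ::
  "('s \<Rightarrow> nat) \<Rightarrow> 's pmf \<Rightarrow> ('s \<Rightarrow> 'a \<Rightarrow> 's pmf) \<Rightarrow> ('s \<Rightarrow> 'x pmf) \<Rightarrow> (nat \<Rightarrow> 'x \<Rightarrow> 'a pmf) \<Rightarrow> 's \<Rightarrow> real" where
  "visit_prob layer mu T q p s = pmf (state_dist mu T q p (layer s - 1)) s"

definition Pi_NS :: "nat \<Rightarrow> ('x \<Rightarrow> 'a pmf) set \<Rightarrow> (nat \<Rightarrow> 'x \<Rightarrow> 'a pmf) set" where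
  "Pi_NS H PolCls = {p. \<forall>h\<in>{1..H}. p h \<in> PolCls}"

text \<open>eta(s) = max over Pi_NS of P_pi[s] (taken as a supremum).\<close>
definition eta where
  "eta H PolCls layer mu T q s = (SUP p\<in>Pi_NS H PolCls. visit_prob layer mu T q p s)"

definition policy_cover where
  "policy_cover H PolCls layer mu T q Psi alpha t \<longleftrightarrow>
     finite Psi \<and> Psi \<noteq> {} \<and>
     (\<forall>s. layer s = t \<longrightarrow>
        Max ((\<lambda>p. visit_prob layer mu T q p s) ` Psi) \<ge> alpha * eta H PolCls layer mu T q s)"

text \<open>rho_h(s): p uniform from Psi, followed on steps 1..h-2, uniform action at step h-1;
  probability that the decoded observation x_h equals s.\<close>
definition rho ::
  "'s pmf \<Rightarrow> ('s \<Rightarrow> 'a::finite \<Rightarrow> 's pmf) \<Rightarrow> ('s \<Rightarrow> 'x pmf) \<Rightarrow> (nat \<Rightarrow> 'x \<Rightarrow> 'a pmf) set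
   \<Rightarrow> nat \<Rightarrow> 's \<Rightarrow> real" where
  "rho mu T q Psi h s =
     measure_pmf.prob
       (pmf_of_set Psi \<bind>
          (\<lambda>p. state_dist mu T q (p(h - 1 := (\<lambda>x. pmf_of_set UNIV))) (h - 1) \<bind> q))
       {x. decoder q x = s}"

end

theory Submission
  imports Defs
begin

lemma mdpD1: "block_mdp H layer xlayer mu T q \<Longrightarrow> set_pmf mu \<subseteq> {s. layer s = 1}"
  unfolding block_mdp_def by (elim conjE)
lemma mdpD2: "block_mdp H layer xlayer mu T q \<Longrightarrow> layer s < H \<Longrightarrow> set_pmf (T s a) \<subseteq> {s'. layer s' = layer s + 1}"
  unfolding block_mdp_def by simp
lemma mdpD3: "block_mdp H layer xlayer mu T q \<Longrightarrow> s \<noteq> s' \<Longrightarrow> set_pmf (q s) \<inter> set_pmf (q s') = {}"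
  unfolding block_mdp_def by simp

lemma decoder_eq:
  assumes mdp: "block_mdp H layer xlayer mu T q" and x: "x \<in> set_pmf (q s)"
  shows "decoder q x = s"
proof -
  have d: "\<And>s s'. s \<noteq> s' \<Longrightarrow> set_pmf (q s) \<inter> set_pmf (q s') = {}"
    using mdpD3[OF mdp] by blast
  show ?thesis unfolding decoder_def
    by (rule the_equality) (use x d in blast)+
qed

lemma map_decoder:
  assumes mdp: "block_mdp H layer xlayer mu T q"
  shows "map_pmf (decoder q) (M \<bind> q) = M"
proof -
  have "map_pmf (decoder q) (M \<bind> q) = M \<bind> (\<lambda>s. map_pmf (decoder q) (q s))"
    by (simp add: map_bind_pmf)
  also have "\<dots> = M \<bind> (\<lambda>s. return_pmf s)"
  proof (rule bind_pmf_cong[OF refl])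
    fix s
    have "map_pmf (decoder q) (q s) = map_pmf (\<lambda>_. s) (q s)"
      by (rule map_pmf_cong[OF refl]) (use decoder_eq[OF mdp] in blast)
    then show "map_pmf (decoder q) (q s) = return_pmf s" by simp
  qed
  also have "\<dots> = M" by (simp add: bind_return_pmf')
  finally show ?thesis .
qed

lemma state_dist_cong:
  "(\<And>j. 0 < j \<Longrightarrow> j \<le> k \<Longrightarrow> p j = p2 j) \<Longrightarrow> state_dist mu T q p k = state_dist mu T q p2 k"
  by (induction k) auto

lemma state_dist_support:
  assumes mdp: "block_mdp H layer xlayer mu T q"
  shows "k < H \<Longrightarrow> x \<in> set_pmf (state_dist mu T q p k) \<Longrightarrow> layer x = Suc k"
proof (induction k arbitrary: x)
  case 0
  then show ?case using mdpD1[OF mdp] by auto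
next
  case (Suc k)
  from Suc.prems(2) have "\<exists>s\<in>set_pmf (state_dist mu T q p k). \<exists>y\<in>set_pmf (q s).
      \<exists>a\<in>set_pmf (p (Suc k) y). x \<in> set_pmf (T s a)" by simp
  then obtain s y a where s: "s \<in> set_pmf (state_dist mu T q p k)"
    and x: "x \<in> set_pmf (T s a)" by blast
  have ls: "layer s = Suc k" using Suc.IH[of s] Suc.prems(1) s by simp
  have "set_pmf (T s a) \<subseteq> {s'. layer s' = layer s + 1}"
    using ls Suc.prems(1) by (intro mdpD2[OF mdp]) simp
  then show ?case using ls x by auto
qed

lemma pmf_bind_finite:
  fixes M :: "'s::finite pmf"
  shows "pmf (M \<bind> f) x = (\<Sum>s\<in>UNIV. pmf (f s) x * pmf M s)"
  unfolding pmf_bind by (rule integral_measure_pmf_real) auto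

lemma inner_le:
  fixes T :: "'s \<Rightarrow> 'a::finite \<Rightarrow> 's pmf"
  shows "pmf (Q \<bind> (\<lambda>x. P x \<bind> T s')) s \<le> (\<Sum>a\<in>UNIV. pmf (T s' a) s)"
proof -
  have b: "pmf (P x \<bind> T s') s \<le> (\<Sum>a\<in>UNIV. pmf (T s' a) s)" for x
  proof -
    have "pmf (P x \<bind> T s') s = (\<Sum>a\<in>UNIV. pmf (T s' a) s * pmf (P x) a)"
      by (rule pmf_bind_finite)
    also have "\<dots> \<le> (\<Sum>a\<in>UNIV. pmf (T s' a) s)"
      by (rule sum_mono) (simp add: mult_left_le pmf_le_1)
    finally show ?thesis .
  qed
  have e: "pmf (Q \<bind> (\<lambda>x. P x \<bind> T s')) s = (\<integral>x. pmf (P x \<bind> T s') s \<partial>measure_pmf Q)"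
    by (rule pmf_bind)
  show ?thesis unfolding e
    apply (rule measure_pmf.integral_le_const)
     apply (rule measure_pmf.integrable_const_bound[of _ 1])
      apply (simp add: pmf_le_1)
     apply simp
    apply (rule AE_I2)
    apply (rule b)
    done
qed

lemma inner_unif:
  fixes T :: "'s \<Rightarrow> 'a::finite \<Rightarrow> 's pmf"
  shows "pmf (Q \<bind> (\<lambda>x. pmf_of_set UNIV \<bind> T s')) s = (\<Sum>a\<in>UNIV. pmf (T s' a) s) / real CARD('a)"
  by (simp add: pmf_bind_pmf_of_set)


theorem mainTheorem9:
  fixes H h N :: nat and alpha :: real
    and layer :: "'s::finite \<Rightarrow> nat" and xlayer :: "'x::countable \<Rightarrow> nat"
    and mu :: "'s pmf" and T :: "'s \<Rightarrow> 'a::finite \<Rightarrow> 's pmf" and q :: "'s \<Rightarrow> 'x pmf"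
    and PolCls :: "('x \<Rightarrow> 'a pmf) set" and Psi :: "(nat \<Rightarrow> 'x \<Rightarrow> 'a pmf) set"
    and s :: 's
  assumes mdp: "block_mdp H layer xlayer mu T q"
    and Pi_ne: "PolCls \<noteq> {}"
    and h: "2 \<le> h" "h \<le> H"
    and cover: "policy_cover H PolCls layer mu T q Psi alpha (h - 1)"
    and card: "card Psi \<le> N"
    and s: "layer s = h"
  shows "rho mu T q Psi h s \<ge> alpha * eta H PolCls layer mu T q s / (real N * real CARD('a))"
proof -
  define k where "k = h - 2"
  have hk: "h = Suc (Suc k)" using h k_def by simp
  have kH: "k < H" using h hk by simp
  define D where "D p = state_dist mu T q p k" for p
  define c where "c s' = (\<Sum>a\<in>UNIV. pmf (T s' a) s)" for s'
  define L where "L = {s'. layer s' = Suc k}"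
  define E where "E s' = eta H PolCls layer mu T q s'" for s'
  define E' where "E' s' = (if s' \<in> L then E s' else 0)" for s'
  have finPsi: "finite Psi" and nePsi: "Psi \<noteq> {}"
    and covMax: "\<And>s'. layer s' = Suc k \<Longrightarrow>
        Max ((\<lambda>p. visit_prob layer mu T q p s') ` Psi) \<ge> alpha * E s'"
    using cover unfolding policy_cover_def E_def by (auto simp: hk)
  have c_nn: "c s' \<ge> 0" for s' unfolding c_def by (simp add: sum_nonneg)
  have vp_s: "visit_prob layer mu T q p s = pmf (state_dist mu T q p (Suc k)) s" for p
    unfolding visit_prob_def using s hk by simp
  have vp_s': "layer s' = Suc k \<Longrightarrow> visit_prob layer mu T q p s' = pmf (D p) s'" for p s'
    unfolding visit_prob_def D_def by simp
  have zero: "s' \<notin> L \<Longrightarrow> pmf (D p) s' = 0" for s' p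
    using state_dist_support[OF mdp kH, of s' p] unfolding L_def D_def
    by (auto simp: set_pmf_eq)
  obtain f where f: "f \<in> PolCls" using Pi_ne by blast
  have PiNS_ne: "Pi_NS H PolCls \<noteq> {}"
    unfolding Pi_NS_def using f by (auto intro!: exI[of _ "\<lambda>_. f"])
  have bdd: "bdd_above ((\<lambda>p. visit_prob layer mu T q p s') ` Pi_NS H PolCls)" for s'
    by (rule bdd_aboveI[of _ 1]) (auto simp: visit_prob_def pmf_le_1)
  have E_ge: "p \<in> Pi_NS H PolCls \<Longrightarrow> visit_prob layer mu T q p s' \<le> E s'" for p s'
    unfolding E_def eta_def by (rule cSUP_upper[OF _ bdd])
  have E_nn: "E s' \<ge> 0" for s'
  proof -
    obtain p where "p \<in> Pi_NS H PolCls" using PiNS_ne by blast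
    then show ?thesis using E_ge[of p s'] unfolding visit_prob_def by (meson order_trans pmf_nonneg)
  qed
  have A: "pmf (state_dist mu T q p (Suc k)) s \<le> (\<Sum>s'\<in>UNIV. pmf (D p) s' * c s')" for p
  proof -
    have "pmf (state_dist mu T q p (Suc k)) s =
      (\<Sum>s'\<in>UNIV. pmf (q s' \<bind> (\<lambda>x. p (Suc k) x \<bind> T s')) s * pmf (D p) s')"
      unfolding D_def by (simp add: pmf_bind_finite)
    also have "\<dots> \<le> (\<Sum>s'\<in>UNIV. pmf (D p) s' * c s')"
      by (rule sum_mono) (simp add: c_def mult.commute mult_left_mono inner_le)
    finally show ?thesis .
  qed
  have etaA: "E s \<le> (\<Sum>s'\<in>UNIV. E' s' * c s')"
    unfolding E_def eta_def
  proof (rule cSUP_least[OF PiNS_ne])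
    fix p assume p: "p \<in> Pi_NS H PolCls"
    have "visit_prob layer mu T q p s \<le> (\<Sum>s'\<in>UNIV. pmf (D p) s' * c s')"
      using A vp_s by simp
    also have "\<dots> \<le> (\<Sum>s'\<in>UNIV. E' s' * c s')"
    proof (rule sum_mono)
      fix s' show "pmf (D p) s' * c s' \<le> E' s' * c s'"
      proof (cases "s' \<in> L")
        case True
        then have "pmf (D p) s' \<le> E s'" using E_ge[OF p, of s'] vp_s'[of s' p] L_def by simp
        then show ?thesis using True c_nn E'_def by (simp add: mult_right_mono)
      next
        case False then show ?thesis using zero E'_def by simp
      qed
    qed
    finally show "visit_prob layer mu T q p s \<le> (\<Sum>s'\<in>UNIV. E' s' * c s')" .
  qed
  have B: "pmf (state_dist mu T q (p(h - 1 := (\<lambda>x. pmf_of_set UNIV))) (h - 1)) s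
      = (\<Sum>s'\<in>UNIV. pmf (D p) s' * c s') / real CARD('a)" for p
  proof -
    have "state_dist mu T q (p(Suc k := (\<lambda>x. pmf_of_set UNIV))) k = D p"
      unfolding D_def by (rule state_dist_cong) simp
    then have "pmf (state_dist mu T q (p(h - 1 := (\<lambda>x. pmf_of_set UNIV))) (h - 1)) s
       = (\<Sum>s'\<in>UNIV. pmf (q s' \<bind> (\<lambda>x. pmf_of_set UNIV \<bind> T s')) s * pmf (D p) s')"
      using hk by (simp add: pmf_bind_finite)
    also have "\<dots> = (\<Sum>s'\<in>UNIV. pmf (D p) s' * c s' / real CARD('a))"
      by (simp only: inner_unif c_def) (simp add: field_simps)
    finally show ?thesis by (simp add: sum_divide_distrib)
  qed
  have rho_eq: "rho mu T q Psi h s =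
      (\<Sum>p\<in>Psi. pmf (state_dist mu T q (p(h - 1 := (\<lambda>x. pmf_of_set UNIV))) (h - 1)) s) / real (card Psi)"
  proof -
    let ?G = "\<lambda>p. state_dist mu T q (p(h - 1 := (\<lambda>x. pmf_of_set UNIV))) (h - 1)"
    have "rho mu T q Psi h s = measure_pmf.prob ((pmf_of_set Psi \<bind> ?G) \<bind> q) {x. decoder q x = s}"
      unfolding rho_def by (simp add: bind_assoc_pmf)
    also have "\<dots> = measure_pmf.prob (map_pmf (decoder q) ((pmf_of_set Psi \<bind> ?G) \<bind> q)) {s}"
      by (simp add: vimage_def)
    also have "\<dots> = pmf (pmf_of_set Psi \<bind> ?G) s"
      by (simp add: map_decoder[OF mdp] measure_pmf_single)
    also have "\<dots> = (\<Sum>p\<in>Psi. pmf (?G p) s) / real (card Psi)"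
      by (rule pmf_bind_pmf_of_set[OF nePsi finPsi])
    finally show ?thesis .
  qed
  have rho_nn: "rho mu T q Psi h s \<ge> 0" unfolding rho_def by simp
  have cardpos: "card Psi > 0" using finPsi nePsi by (simp add: card_gt_0_iff)
  show ?thesis
  proof (cases "alpha \<ge> 0")
    case False
    then have "alpha * E s \<le> 0" using E_nn by (simp add: mult_nonpos_nonneg)
    then have "alpha * E s / (real N * real CARD('a)) \<le> 0"
      by (simp add: divide_nonpos_nonneg)
    then show ?thesis using rho_nn E_def by simp
  next
    case True
    have colsum: "alpha * E' s' \<le> (\<Sum>p\<in>Psi. pmf (D p) s')" for s'
    proof (cases "s' \<in> L")
      case True
      have "Max ((\<lambda>p. visit_prob layer mu T q p s') ` Psi) \<in> (\<lambda>p. visit_prob layer mu T q p s') ` Psi"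
        using finPsi nePsi by (intro Max_in) auto
      then obtain p0 where p0: "p0 \<in> Psi"
        and eq: "Max ((\<lambda>p. visit_prob layer mu T q p s') ` Psi) = visit_prob layer mu T q p0 s'"
        by auto
      have "alpha * E' s' \<le> pmf (D p0) s'"
        using covMax[of s'] True eq vp_s'[of s' p0] unfolding E'_def L_def by simp
      also have "\<dots> \<le> (\<Sum>p\<in>Psi. pmf (D p) s')"
        by (rule member_le_sum[OF p0]) (auto simp: finPsi)
      finally show ?thesis .
    next
      case False then show ?thesis by (simp add: E'_def sum_nonneg)
    qed
    have "alpha * E s \<le> alpha * (\<Sum>s'\<in>UNIV. E' s' * c s')"
      using etaA True by (simp add: mult_left_mono)
    also have "\<dots> = (\<Sum>s'\<in>UNIV. (alpha * E' s') * c s')"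
      by (simp add: sum_distrib_left mult.assoc)
    also have "\<dots> \<le> (\<Sum>s'\<in>UNIV. (\<Sum>p\<in>Psi. pmf (D p) s') * c s')"
      by (rule sum_mono) (use colsum c_nn in \<open>simp add: mult_right_mono\<close>)
    also have "\<dots> = (\<Sum>p\<in>Psi. \<Sum>s'\<in>UNIV. pmf (D p) s' * c s')"
      by (simp add: sum_distrib_right sum.swap[of _ UNIV Psi])
    finally have key: "alpha * E s \<le> (\<Sum>p\<in>Psi. \<Sum>s'\<in>UNIV. pmf (D p) s' * c s')" .
    have "rho mu T q Psi h s = (\<Sum>p\<in>Psi. \<Sum>s'\<in>UNIV. pmf (D p) s' * c s') / (real (card Psi) * real CARD('a))"
      unfolding rho_eq B by (simp add: sum_divide_distrib[symmetric] field_simps)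
    also have "\<dots> \<ge> alpha * E s / (real (card Psi) * real CARD('a))"
      using key cardpos by (simp add: divide_right_mono)
    finally have r1: "alpha * E s / (real (card Psi) * real CARD('a)) \<le> rho mu T q Psi h s" .
    have "alpha * E s / (real N * real CARD('a)) \<le> alpha * E s / (real (card Psi) * real CARD('a))"
      using True E_nn[of s] card cardpos
      by (intro divide_left_mono mult_right_mono) auto
    with r1 show ?thesis unfolding E_def by linarith
  qed
qed

end
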